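(* Let $0<p<1$, $q=1-p$, let $\{X_i,i\geq 1\}$ be independent with $P\{X_i=1\}=p$, $P\{X_i=0\}=q$, and write $\lambda=1/\sqrt{pq}$. Let $\varepsilon>0$. Then for almost all $\omega$ there exists a finite $N_0=N_0(\omega,\varepsilon)$ such that for all $N\geq N_0$, $$M_N\geq \left\lfloor \log_{\lambda} N-\log_{\lambda}\log_{\lambda}\log_{\lambda} N+\log_{\lambda}\log_{\lambda} e-\log_{\lambda}2- 1- \varepsilon\right\rfloor .$$
   Context: For $m,n\in\mathbb N$ let $S_n^{(m)}:=\sum_{i=m+1}^{n+m-1}\big[(1-X_{i-1})X_i+X_{i-1}(1-X_i)\big]$ be the number of switches among $X_m,\ldots,X_{m+n-1}$. For $m,N\in\mathbb N$ and $n=1,\ldots,N$ let $H_{m,n}^{(N)}:=\bigcup_{i=m}^{m+N-n+1}\{S_n^{(i)}=n-1\}$, and $M_N^{(m)}:=\max_{1\leq n\leq N}\{n-1 : H_{m,n}^{(N)}\neq\emptyset\}$ (length of the longest consecutive switches in $X_m,\ldots,X_{m+N-1}$). Write $M_N:=M_N^{(1)}$. *)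

theory Defs
  imports "HOL-Probability.Probability"
begin

definition switches :: "(nat \<Rightarrow> 'a \<Rightarrow> real) \<Rightarrow> nat \<Rightarrow> nat \<Rightarrow> 'a \<Rightarrow> real" where
  "switches X n m \<omega> =
     (\<Sum>i\<in>{m+1..n+m-1}. (1 - X (i-1) \<omega>) * X i \<omega> + X (i-1) \<omega> * (1 - X i \<omega>))"

definition Hev :: "(nat \<Rightarrow> 'a \<Rightarrow> real) \<Rightarrow> nat \<Rightarrow> nat \<Rightarrow> nat \<Rightarrow> 'a set" where
  "Hev X m n N = {\<omega>. \<exists>i\<in>{m..m+N-n+1}. switches X n i \<omega> = real n - 1}"

text \<open>M_N^{(m)}: length of the longest run of consecutive switches in X_m..X_{m+N-1}.\<close>
definition longest_switch :: "(nat \<Rightarrow> 'a \<Rightarrow> real) \<Rightarrow> nat \<Rightarrow> nat \<Rightarrow> 'a \<Rightarrow> nat" where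
  "longest_switch X m N \<omega> = Max {n - 1 | n. 1 \<le> n \<and> n \<le> N \<and> \<omega> \<in> Hev X m n N}"

end

theory Submission
  imports Defs "HOL-Real_Asymp.Real_Asymp"
begin


lemma (in prob_space) bonf:
  assumes "finite S" "\<And>i. i \<in> S \<Longrightarrow> A i \<in> events"
  shows "prob (\<Union>i\<in>S. A i) \<ge> (\<Sum>i\<in>S. prob (A i)) - (\<Sum>i\<in>S. \<Sum>j\<in>S-{i}. prob (A i \<inter> A j))"
  using assms
proof (induction S rule: finite_induct)
  case empty
  then show ?case by simp
next
  case (insert a F)
  have ev: "\<And>i. i \<in> F \<Longrightarrow> A i \<in> events" and ea: "A a \<in> events" using insert.prems by auto
  have IH: "prob (\<Union>i\<in>F. A i) \<ge> (\<Sum>i\<in>F. prob (A i)) - (\<Sum>i\<in>F. \<Sum>j\<in>F-{i}. prob (A i \<inter> A j))"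
    using insert.IH ev by blast
  have U: "(\<Union>i\<in>F. A i) \<in> events" using ev insert.hyps(1) by auto
  have "prob (\<Union>i\<in>insert a F. A i) = prob (A a \<union> (\<Union>i\<in>F. A i))" by simp
  also have "\<dots> = prob (A a) + prob (\<Union>i\<in>F. A i) - prob (A a \<inter> (\<Union>i\<in>F. A i))"
    using ea U by (intro measure_Un3) (auto simp: fmeasurable_eq_sets)
  finally have e1: "prob (\<Union>i\<in>insert a F. A i) = prob (A a) + prob (\<Union>i\<in>F. A i) - prob (A a \<inter> (\<Union>i\<in>F. A i))" .
  have "prob (A a \<inter> (\<Union>i\<in>F. A i)) = prob (\<Union>j\<in>F. A a \<inter> A j)"
    by (rule arg_cong[where f=prob]) blast
  also have "\<dots> \<le> (\<Sum>j\<in>F. prob (A a \<inter> A j))"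
    using ev ea insert.hyps(1) by (intro measure_UNION_le) auto
  finally have e2: "prob (A a \<inter> (\<Union>i\<in>F. A i)) \<le> (\<Sum>j\<in>F. prob (A a \<inter> A j))" .
  have s1: "(\<Sum>i\<in>insert a F. prob (A i)) = prob (A a) + (\<Sum>i\<in>F. prob (A i))"
    using insert.hyps by simp
  have s2a: "(\<Sum>i\<in>insert a F. \<Sum>j\<in>insert a F-{i}. prob (A i \<inter> A j))
      = (\<Sum>j\<in>insert a F-{a}. prob (A a \<inter> A j)) + (\<Sum>i\<in>F. \<Sum>j\<in>insert a F-{i}. prob (A i \<inter> A j))"
    using insert.hyps by simp
  have s2b: "(\<Sum>j\<in>insert a F-{a}. prob (A a \<inter> A j)) = (\<Sum>j\<in>F. prob (A a \<inter> A j))"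
    using insert.hyps by (intro sum.cong) auto
  have s2c: "(\<Sum>i\<in>F. \<Sum>j\<in>insert a F-{i}. prob (A i \<inter> A j)) \<ge> (\<Sum>i\<in>F. \<Sum>j\<in>F-{i}. prob (A i \<inter> A j))"
  proof (intro sum_mono)
    fix i assume "i \<in> F"
    show "(\<Sum>j\<in>F-{i}. prob (A i \<inter> A j)) \<le> (\<Sum>j\<in>insert a F-{i}. prob (A i \<inter> A j))"
      using insert.hyps by (intro sum_mono2) auto
  qed
  have s2: "(\<Sum>i\<in>insert a F. \<Sum>j\<in>insert a F-{i}. prob (A i \<inter> A j)) \<ge> (\<Sum>j\<in>F. prob (A a \<inter> A j)) + (\<Sum>i\<in>F. \<Sum>j\<in>F-{i}. prob (A i \<inter> A j))"
    using s2a s2b s2c by linarith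
  show ?case using e1 e2 s1 s2 IH by linarith
qed

locale swl = prob_space M for M :: "'a measure" +
  fixes X :: "nat \<Rightarrow> 'a \<Rightarrow> real" and p :: real
  assumes p0: "0 < p" and p1: "p < 1"
    and indep: "indep_vars (\<lambda>_. borel) X {1..}"
    and PX1: "\<And>i. i \<ge> 1 \<Longrightarrow> prob {\<omega> \<in> space M. X i \<omega> = 1} = p"
    and PX0: "\<And>i. i \<ge> 1 \<Longrightarrow> prob {\<omega> \<in> space M. X i \<omega> = 0} = 1 - p"
begin

definition gen :: "nat \<Rightarrow> 'a set set" where "gen i = {X i -` A \<inter> space M | A. A \<in> sets borel}"

definition cyl :: "nat set \<Rightarrow> (nat \<Rightarrow> real) \<Rightarrow> 'a set" where
  "cyl J v = {\<omega> \<in> space M. \<forall>j\<in>J. X j \<omega> = v j}"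

definition wv :: "real \<Rightarrow> real" where "wv z = (if z = 1 then p else 1 - p)"

definition sig :: "nat set \<Rightarrow> 'a set set" where "sig I = sigma_sets (space M) (\<Union>i\<in>I. gen i)"

lemma indep_gen: "indep_sets gen {1..}" using indep unfolding indep_vars_def2 gen_def by simp

lemma rv: "i \<ge> 1 \<Longrightarrow> X i \<in> borel_measurable M" using indep unfolding indep_vars_def2 by auto

lemma sig_alg: "sigma_algebra (space M) (sig I)"
  unfolding sig_def by (rule sigma_algebra_sigma_sets) (auto simp: gen_def)

lemma sig_events: assumes "I \<subseteq> {1..}" shows "sig I \<subseteq> events"
  unfolding sig_def
proof (rule sets.sigma_sets_subset)
  show "(\<Union>i\<in>I. gen i) \<subseteq> events"
    using assms rv by (auto simp: gen_def)
qed

lemma cyl_sig: assumes "finite J" "J \<subseteq> I" shows "cyl J v \<in> sig I"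
proof -
  interpret S: sigma_algebra "space M" "sig I" by (rule sig_alg)
  show ?thesis
  proof (cases "J = {}")
    case True then have "cyl J v = space M" by (auto simp: cyl_def)
    then show ?thesis using S.top by simp
  next
    case False
    have eq: "cyl J v = (\<Inter>j\<in>J. X j -` {v j} \<inter> space M)" using False by (auto simp: cyl_def)
    have b: "X j -` {v j} \<inter> space M \<in> sig I" if "j \<in> J" for j
      unfolding sig_def
    proof (rule sigma_sets.Basic)
      have "{v j} \<in> sets borel" by simp
      then show "X j -` {v j} \<inter> space M \<in> (\<Union>i\<in>I. gen i)"
        using that assms unfolding gen_def by blast
    qed
    show ?thesis unfolding eq by (rule S.finite_INT[OF assms(1) False b])
  qed
qed

lemma prob_cyl:
  assumes "finite J" "J \<subseteq> {1..}" "\<And>j. j \<in> J \<Longrightarrow> v j = 0 \<or> v j = 1"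
  shows "prob (cyl J v) = (\<Prod>j\<in>J. wv (v j))"
proof (cases "J = {}")
  case True then have "cyl J v = space M" by (auto simp: cyl_def)
  then show ?thesis using True prob_space by simp
next
  case False
  have "cyl J v = (\<Inter>j\<in>J. X j -` {v j} \<inter> space M)" using False by (auto simp: cyl_def)
  have g: "\<forall>j\<in>J. X j -` {v j} \<inter> space M \<in> gen j"
  proof
    fix j assume "j \<in> J"
    have "{v j} \<in> sets borel" by simp
    then show "X j -` {v j} \<inter> space M \<in> gen j" unfolding gen_def by blast
  qed
  have "prob (cyl J v) = (\<Prod>j\<in>J. prob (X j -` {v j} \<inter> space M))"
    unfolding \<open>cyl J v = _\<close>
    by (rule indep_setsD[OF indep_gen assms(2) False assms(1) g])
  also have "\<dots> = (\<Prod>j\<in>J. wv (v j))"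
  proof (intro prod.cong refl)
    fix j assume j: "j \<in> J"
    have e: "X j -` {v j} \<inter> space M = {\<omega> \<in> space M. X j \<omega> = v j}" by auto
    show "prob (X j -` {v j} \<inter> space M) = wv (v j)"
      using assms(3)[OF j] assms(2) j PX0 PX1 unfolding e wv_def by auto
  qed
  finally show ?thesis .
qed

lemma Int_stable_gen: "Int_stable (gen i)"
  unfolding gen_def
  apply (auto simp: Int_stable_def)
  apply (rule_tac x="A \<inter> Aa" in exI)
  apply auto
  done

lemma indep_blocks:
  assumes "finite K" "K \<noteq> {}" "disjoint_family_on I K" "(\<Union>k\<in>K. I k) \<subseteq> {1..}"
    "\<And>k. k \<in> K \<Longrightarrow> E k \<in> sig (I k)"
  shows "prob (\<Inter>k\<in>K. E k) = (\<Prod>k\<in>K. prob (E k))"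
proof -
  have "indep_sets (\<lambda>k. sigma_sets (space M) (\<Union>i\<in>I k. gen i)) K"
    by (rule indep_sets_collect_sigma[OF indep_sets_mono_index[OF assms(4) indep_gen] Int_stable_gen assms(3)])
  then show ?thesis
    using assms by (intro indep_setsD) (auto simp: sig_def)
qed

lemma indep_two:
  assumes "I1 \<inter> I2 = {}" "I1 \<subseteq> {1..}" "I2 \<subseteq> {1..}" "E \<in> sig I1" "F \<in> sig I2"
  shows "prob (E \<inter> F) = prob E * prob F"
proof -
  let ?I = "\<lambda>k::nat. if k = 0 then I1 else I2"
  let ?E = "\<lambda>k::nat. if k = 0 then E else F"
  have "prob (\<Inter>k\<in>{0,1}. ?E k) = (\<Prod>k\<in>{0,1}. prob (?E k))"
  proof (rule indep_blocks)
    show "disjoint_family_on ?I {0, 1}"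
      using assms(1) by (auto simp: disjoint_family_on_def)
    show "(\<Union>k\<in>{0,1}. ?I k) \<subseteq> {1..}" using assms(2,3) by auto
    fix k :: nat assume "k \<in> {0,1}"
    then show "?E k \<in> sig (?I k)" using assms(4,5) by auto
  qed auto
  then show ?thesis by (simp add: Int_commute)
qed

end



context swl begin

definition pat :: "bool \<Rightarrow> nat \<Rightarrow> real" where "pat b t = (if even t = b then 1 else 0)"
definition cylo :: "nat \<Rightarrow> nat \<Rightarrow> (nat \<Rightarrow> real) \<Rightarrow> 'a set" where
  "cylo i n f = {\<omega> \<in> space M. \<forall>t<n. X (i+t) \<omega> = f t}"
definition W :: "bool \<Rightarrow> nat \<Rightarrow> real" where "W b n = (\<Prod>t<n. wv (pat b t))"
definition Dc :: "nat \<Rightarrow> nat \<Rightarrow> bool \<Rightarrow> 'a set" where "Dc n i b = cylo (i-1) (Suc n) (\<lambda>t. pat b (t-1))"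
definition Alt :: "nat \<Rightarrow> nat \<Rightarrow> bool \<Rightarrow> 'a set" where "Alt n i b = cylo i n (pat b)"
definition D :: "nat \<Rightarrow> nat \<Rightarrow> 'a set" where "D n i = Dc n i True \<union> Dc n i False"
definition r :: real where "r = sqrt (p * (1 - p))"

lemma sig_Un: "A \<in> sig I \<Longrightarrow> B \<in> sig I \<Longrightarrow> A \<union> B \<in> sig I"
proof -
  interpret S: sigma_algebra "space M" "sig I" by (rule sig_alg)
  show "A \<in> sig I \<Longrightarrow> B \<in> sig I \<Longrightarrow> A \<union> B \<in> sig I" by auto
qed

lemma sig_compl: "A \<in> sig I \<Longrightarrow> space M - A \<in> sig I"
proof -
  interpret S: sigma_algebra "space M" "sig I" by (rule sig_alg)
  show "A \<in> sig I \<Longrightarrow> space M - A \<in> sig I" by auto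
qed

lemma sig_UN: "finite S \<Longrightarrow> (\<And>i. i \<in> S \<Longrightarrow> A i \<in> sig I) \<Longrightarrow> (\<Union>i\<in>S. A i) \<in> sig I"
proof -
  interpret S: sigma_algebra "space M" "sig I" by (rule sig_alg)
  show "finite S \<Longrightarrow> (\<And>i. i \<in> S \<Longrightarrow> A i \<in> sig I) \<Longrightarrow> (\<Union>i\<in>S. A i) \<in> sig I" by auto
qed

lemma pat01: "pat b t = 0 \<or> pat b t = 1" by (simp add: pat_def)

lemma wv1: "wv 1 = p" and wv0: "wv 0 = 1 - p" by (auto simp: wv_def)

lemma cylo_eq: "cylo i n f = cyl ((+) i ` {..<n}) (\<lambda>j. f (j - i))"
  by (auto simp: cyl_def cylo_def)

lemma prob_cylo:
  assumes "i \<ge> 1" "\<And>t. f t = 0 \<or> f t = 1"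
  shows "prob (cylo i n f) = (\<Prod>t<n. wv (f t))"
proof -
  have "prob (cylo i n f) = (\<Prod>j\<in>(+) i ` {..<n}. wv (f (j - i)))"
    unfolding cylo_eq using assms by (intro prob_cyl) auto
  also have "\<dots> = (\<Prod>t<n. wv (f t))"
    by (subst prod.reindex) (auto simp: inj_on_def)
  finally show ?thesis .
qed

lemma cylo_sig: assumes "{i..<i+n} \<subseteq> I" shows "cylo i n f \<in> sig I"
  unfolding cylo_eq using assms by (intro cyl_sig) auto

lemma cylo_events: assumes "i \<ge> 1" shows "cylo i n f \<in> events"
proof -
  have "{i..<i+n} \<subseteq> {1..}" using assms by auto
  then show ?thesis using cylo_sig[of i n "{i..<i+n}" f] sig_events[of "{i..<i+n}"] by auto
qed

lemma W_even: "W b (2*k) = (p*(1-p))^k"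
proof (induction k)
  case 0 then show ?case by (simp add: W_def)
next
  case (Suc k)
  have e1: "W b (2*Suc k) = W b (2*k) * (wv (pat b (2*k)) * wv (pat b (Suc (2*k))))"
    by (simp add: W_def mult.assoc)
  have e2: "wv (pat b (2*k)) * wv (pat b (Suc (2*k))) = p * (1-p)"
    by (cases b) (auto simp: pat_def wv_def)
  show ?case unfolding e1 e2 Suc.IH by (simp add: power_Suc2)
qed

lemma W_odd: "W b (Suc (2*k)) = (p*(1-p))^k * (if b then p else 1-p)"
proof -
  have "W b (Suc (2*k)) = W b (2*k) * wv (pat b (2*k))" by (simp add: W_def)
  then show ?thesis by (cases b) (auto simp: W_even pat_def wv_def)
qed

lemma prob_Dc: assumes "i \<ge> 2" shows "prob (Dc n i b) = (if b then p else 1-p) * W b n"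
proof -
  have "prob (Dc n i b) = (\<Prod>t<Suc n. wv (pat b (t-1)))"
    unfolding Dc_def using assms pat01 by (intro prob_cylo) auto
  also have "\<dots> = wv (pat b 0) * W b n"
    unfolding prod.lessThan_Suc_shift W_def by simp
  finally show ?thesis by (cases b) (auto simp: pat_def wv_def)
qed

lemma Dc_events: "i \<ge> 2 \<Longrightarrow> Dc n i b \<in> events"
  unfolding Dc_def by (intro cylo_events) auto

lemma D_events: "i \<ge> 2 \<Longrightarrow> D n i \<in> events"
  unfolding D_def using Dc_events by auto

lemma Alt_events: "i \<ge> 1 \<Longrightarrow> Alt n i b \<in> events"
  unfolding Alt_def by (intro cylo_events) auto

lemma prob_Alt: "i \<ge> 1 \<Longrightarrow> prob (Alt n i b) = W b n"
  unfolding Alt_def W_def using pat01 by (intro prob_cylo) auto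

lemma prob_D: assumes "i \<ge> 2" shows "prob (D n i) = p * W True n + (1-p) * W False n"
proof -
  have d: "Dc n i True \<inter> Dc n i False = {}"
    by (auto simp: Dc_def cylo_def pat_def dest: spec[of _ 0])
  have "prob (D n i) = prob (Dc n i True) + prob (Dc n i False)"
    unfolding D_def using d Dc_events assms by (intro finite_measure_Union) auto
  then show ?thesis using prob_Dc assms by simp
qed

lemma r_sq: "r^2 = p*(1-p)" unfolding r_def using p0 p1 by simp
lemma r_pos: "r > 0" unfolding r_def using p0 p1 by simp
lemma r_half: "2 * r \<le> 1"
proof -
  have "0 \<le> (p - 1/2)^2" by simp
  then have "p*(1-p) \<le> (1/2)^2" by (simp add: power2_eq_square algebra_simps)
  then have "r^2 \<le> (1/2)^2" using r_sq by simp
  then have "r \<le> 1/2" by (rule power2_le_imp_le) simp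
  then show ?thesis by simp
qed

lemma D_lower: assumes "i \<ge> 2" shows "prob (D n i) \<ge> r^n"
proof (cases "even n")
  case True
  then obtain k where k: "n = 2*k" by (auto elim: evenE)
  have gx: "\<And>x. p*x + (1-p)*x = x" by (simp add: algebra_simps)
  have "prob (D n i) = p * (p*(1-p))^k + (1-p) * (p*(1-p))^k" using prob_D[OF assms] by (simp add: k W_even)
  also have "\<dots> = (p*(1-p))^k" by (rule gx)
  also have "\<dots> = r^n" by (simp only: k power_mult r_sq)
  finally show ?thesis by simp
next
  case False
  then obtain k where k: "n = 2*k+1" by (auto elim: oddE)
  have "prob (D n i) = p * ((p*(1-p))^k * p) + (1-p) * ((p*(1-p))^k * (1-p))" using prob_D[OF assms] by (simp add: k W_odd)
  also have "\<dots> = (p*(1-p))^k * (p^2 + (1-p)^2)" by (simp add: algebra_simps power2_eq_square)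
  finally have "prob (D n i) = (p*(1-p))^k * (p^2 + (1-p)^2)" .
  moreover have "r^n = (p*(1-p))^k * r" unfolding k power_add power_mult r_sq by simp
  moreover have "r \<le> p^2 + (1-p)^2"
  proof -
    have "0 \<le> (p - 1/2)^2" by simp
    then have "p^2 + (1-p)^2 \<ge> 1/2" by (simp add: power2_eq_square algebra_simps)
    then show ?thesis using r_half by linarith
  qed
  moreover have "(p*(1-p))^k \<ge> 0" using p0 p1 by simp
  ultimately show ?thesis by (simp add: mult_left_mono)
qed

lemma Alt_upper: assumes "i \<ge> 1" "n \<ge> 1"
  shows "prob (Alt n i True) + prob (Alt n i False) \<le> r^(n-1)"
proof (cases "even n")
  case True
  then obtain k where k: "n = 2*k" by (auto elim: evenE)
  with assms have k1: "k \<ge> 1" by simp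
  have "prob (Alt n i True) + prob (Alt n i False) = 2 * (r^2)^k"
    unfolding prob_Alt[OF assms(1)] k W_even r_sq by simp
  also have "(r^2)^k = r * r^(n-1)"
    using k k1 by (simp add: power_mult[symmetric] power_Suc[symmetric])
  finally have e: "prob (Alt n i True) + prob (Alt n i False) = (2*r) * r^(n-1)" by simp
  have "(2*r) * r^(n-1) \<le> 1 * r^(n-1)"
    using r_half r_pos by (intro mult_right_mono) auto
  then show ?thesis using e by simp
next
  case False
  then obtain k where k: "n = 2*k+1" by (auto elim: oddE)
  have "prob (Alt n i True) + prob (Alt n i False) = (p*(1-p))^k * p + (p*(1-p))^k * (1-p)"
    by (simp add: prob_Alt[OF assms(1)] k W_odd)
  also have "\<dots> = (p*(1-p))^k" by (simp add: algebra_simps)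
  also have "\<dots> = r^(n-1)" unfolding k r_sq[symmetric] by (simp add: power_mult)
  finally show ?thesis by simp
qed

lemma Dc_sub_Alt: assumes "i \<ge> 2" shows "Dc n i b \<subseteq> Alt n i b"
proof
  fix \<omega> assume "\<omega> \<in> Dc n i b"
  then have h: "\<omega> \<in> space M" "\<And>t. t < Suc n \<Longrightarrow> X (i - 1 + t) \<omega> = pat b (t-1)"
    by (auto simp: Dc_def cylo_def)
  have "X (i + t) \<omega> = pat b t" if "t < n" for t
    using h(2)[of "Suc t"] that assms by simp
  then show "\<omega> \<in> Alt n i b" using h(1) by (auto simp: Alt_def cylo_def)
qed

lemma pair_far: assumes "i \<ge> 2" "j \<ge> i + n" "n \<ge> 1"
  shows "prob (D n i \<inter> D n j) \<le> r^(2*(n-1))"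
proof -
  let ?A = "Alt n i True \<union> Alt n i False" and ?B = "Alt n j True \<union> Alt n j False"
  have "D n i \<subseteq> ?A" unfolding D_def using Dc_sub_Alt[of i n] assms by blast
  moreover have "D n j \<subseteq> ?B" unfolding D_def using Dc_sub_Alt[of j n] assms by auto
  ultimately have sub: "D n i \<inter> D n j \<subseteq> ?A \<inter> ?B" by blast
  have sA: "?A \<in> sig {i..<i+n}"
    using sig_Un cylo_sig unfolding Alt_def by auto
  have sB: "?B \<in> sig {j..<j+n}"
    using sig_Un cylo_sig unfolding Alt_def by auto
  have evA: "?A \<in> events" and evB: "?B \<in> events" using Alt_events assms by auto
  have "prob (D n i \<inter> D n j) \<le> prob (?A \<inter> ?B)"
    using sub evA evB by (intro finite_measure_mono) auto
  also have "\<dots> = prob ?A * prob ?B"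
    using assms sA sB by (intro indep_two) auto
  also have "\<dots> \<le> r^(n-1) * r^(n-1)"
  proof (intro mult_mono)
    show "prob ?A \<le> r^(n-1)"
      using measure_Un_le[of "Alt n i True" M "Alt n i False"] Alt_upper[of i n] Alt_events assms by simp
    show "prob ?B \<le> r^(n-1)"
      using measure_Un_le[of "Alt n j True" M "Alt n j False"] Alt_upper[of j n] Alt_events assms by simp
  qed (use r_pos in auto)
  finally show ?thesis by (simp add: power_add[symmetric] mult_2)
qed

lemma pat_Suc: "pat b (Suc m) \<noteq> pat b m" by (simp add: pat_def)

lemma pair_near: assumes "i \<ge> 2" "i < j" "j < i + n"
  shows "D n i \<inter> D n j = {}"
proof -
  have "False" if w1: "\<omega> \<in> Dc n i b" and w2: "\<omega> \<in> Dc n j b'" for \<omega> b b'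
  proof -
    have h1: "\<And>t. t < Suc n \<Longrightarrow> X (i - 1 + t) \<omega> = pat b (t-1)"
      using w1 by (auto simp: Dc_def cylo_def)
    have h2: "\<And>t. t < Suc n \<Longrightarrow> X (j - 1 + t) \<omega> = pat b' (t-1)"
      using w2 by (auto simp: Dc_def cylo_def)
    have a1: "X (j-1) \<omega> = pat b' 0" using h2[of 0] by simp
    have a2: "X j \<omega> = pat b' 0" using h2[of 1] assms by simp
    have b1: "X (j-1) \<omega> = pat b (j-i-1)" using h1[of "j-i"] assms
      by (simp add: Suc_diff_le)
    have b2: "X j \<omega> = pat b (j-i)" using h1[of "j-i+1"] assms by simp
    have "j - i = Suc (j-i-1)" using assms by simp
    then have "pat b (j-i) \<noteq> pat b (j-i-1)" using pat_Suc by metis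
    then show False using a1 a2 b1 b2 by simp
  qed
  then show ?thesis unfolding D_def by blast
qed

end



context swl begin

definition Sb :: "nat \<Rightarrow> nat \<Rightarrow> nat \<Rightarrow> nat set" where "Sb n B k = {k*B+2..<k*B+B-n+2}"
definition G :: "nat \<Rightarrow> nat \<Rightarrow> nat \<Rightarrow> 'a set" where "G n B k = (\<Union>i\<in>Sb n B k. D n i)"
definition Bad :: "nat \<Rightarrow> nat \<Rightarrow> nat \<Rightarrow> 'a set" where
  "Bad N n B = space M \<inter> (\<Inter>k\<in>{..<N div B}. space M - G n B k)"

lemma pair_bound: assumes "i \<ge> 2" "j \<ge> 2" "i \<noteq> j" "n \<ge> 1"
  shows "prob (D n i \<inter> D n j) \<le> r^(2*(n-1))"
proof -
  have c0: "0 \<le> r^(2*(n-1))" using r_pos by simp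
  have *: "prob (D n a \<inter> D n b) \<le> r^(2*(n-1))" if "a \<ge> 2" "a < b" for a b
  proof (cases "b < a + n")
    case True
    then have "D n a \<inter> D n b = {}" using pair_near that by blast
    then show ?thesis using c0 by simp
  next
    case False
    show ?thesis by (rule pair_far) (use that assms(4) False in auto)
  qed
  show ?thesis
  proof (cases "i < j")
    case True then show ?thesis using *[of i j] assms by simp
  next
    case False
    then have "j < i" using assms(3) by simp
    then show ?thesis using *[of j i] assms by (simp add: Int_commute)
  qed
qed

lemma card_Sb: "n < B \<Longrightarrow> card (Sb n B k) = B - n"
  unfolding Sb_def by simp

lemma Sb_ge2: "i \<in> Sb n B k \<Longrightarrow> i \<ge> 2" unfolding Sb_def by simp

lemma G_lower: assumes "n \<ge> 1" "n < B"
  shows "prob (G n B k) \<ge> real (B-n) * r^n - real (B-n)^2 * r^(2*(n-1))"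
proof -
  let ?S = "Sb n B k" and ?c = "r^(2*(n-1))"
  have fin: "finite ?S" unfolding Sb_def by simp
  have c0: "0 \<le> ?c" using r_pos by simp
  have "prob (G n B k) \<ge> (\<Sum>i\<in>?S. prob (D n i)) - (\<Sum>i\<in>?S. \<Sum>j\<in>?S-{i}. prob (D n i \<inter> D n j))"
    unfolding G_def using fin D_events Sb_ge2 by (intro bonf) auto
  moreover have "(\<Sum>i\<in>?S. prob (D n i)) \<ge> (\<Sum>i\<in>?S. r^n)"
    using D_lower Sb_ge2 by (intro sum_mono) auto
  moreover have "(\<Sum>i\<in>?S. r^n) = real (B-n) * r^n" using card_Sb[OF assms(2)] by simp
  moreover have "(\<Sum>i\<in>?S. \<Sum>j\<in>?S-{i}. prob (D n i \<inter> D n j)) \<le> real (B-n)^2 * ?c"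
  proof -
    have "(\<Sum>i\<in>?S. \<Sum>j\<in>?S-{i}. prob (D n i \<inter> D n j)) \<le> (\<Sum>i\<in>?S. real (B-n) * ?c)"
    proof (intro sum_mono)
      fix i assume i: "i \<in> ?S"
      have "(\<Sum>j\<in>?S-{i}. prob (D n i \<inter> D n j)) \<le> real (card (?S-{i})) * ?c"
        using pair_bound Sb_ge2 i assms(1) by (intro sum_bounded_above) auto
      also have "\<dots> \<le> real (B-n) * ?c"
        using card_Sb[OF assms(2)] card_Diff1_le[of ?S i] fin c0 by (intro mult_right_mono) auto
      finally show "(\<Sum>j\<in>?S-{i}. prob (D n i \<inter> D n j)) \<le> real (B-n) * ?c" .
    qed
    also have "\<dots> = real (B-n)^2 * ?c" using card_Sb[OF assms(2)] by (simp add: power2_eq_square)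
    finally show ?thesis .
  qed
  ultimately show ?thesis by linarith
qed

lemma G_events: "G n B k \<in> events"
  unfolding G_def using D_events Sb_ge2 by (intro sets.finite_UN) (auto simp: Sb_def)

lemma G_sig: assumes "n < B" shows "G n B k \<in> sig {k*B+1..<k*B+B+1}"
  unfolding G_def
proof (rule sig_UN)
  show "finite (Sb n B k)" by (simp add: Sb_def)
  fix i assume i: "i \<in> Sb n B k"
  have "{i-1..<i-1+Suc n} \<subseteq> {k*B+1..<k*B+B+1}" using i assms by (auto simp: Sb_def)
  then show "D n i \<in> sig {k*B+1..<k*B+B+1}"
    unfolding D_def Dc_def by (intro sig_Un cylo_sig) auto
qed

lemma blocks_disj: "k < k' \<Longrightarrow> k*B + B \<le> k'*(B::nat)"
  by (metis Suc_leI add.commute mult_Suc mult_le_mono1)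

lemma prob_Bad: assumes "n \<ge> 1" "n < B"
  shows "prob (Bad N n B) \<le> exp (- (real (N div B) * (real (B-n) * r^n - real (B-n)^2 * r^(2*(n-1)))))"
proof (cases "N div B = 0")
  case True
  then show ?thesis by (simp add: Bad_def)
next
  case False
  let ?K = "N div B" and ?g = "real (B-n) * r^n - real (B-n)^2 * r^(2*(n-1))"
  let ?I = "\<lambda>k. {k*B+1..<k*B+B+1}"
  have eq: "Bad N n B = (\<Inter>k\<in>{..<?K}. space M - G n B k)"
    using False unfolding Bad_def by auto
  have "prob (\<Inter>k\<in>{..<?K}. space M - G n B k) = (\<Prod>k\<in>{..<?K}. prob (space M - G n B k))"
  proof (rule indep_blocks)
    show "disjoint_family_on ?I {..<?K}"
      unfolding disjoint_family_on_def
    proof (intro ballI impI)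
      fix k k' assume "k \<in> {..<?K}" "k' \<in> {..<?K}" "k \<noteq> k'"
      then consider "k < k'" | "k' < k" by linarith
      then show "?I k \<inter> ?I k' = {}"
      proof cases
        case 1 then show ?thesis using blocks_disj[of k k' B] by auto
      next
        case 2 then show ?thesis using blocks_disj[of k' k B] by auto
      qed
    qed
    show "(\<Union>k\<in>{..<?K}. ?I k) \<subseteq> {1..}" by auto
    fix k assume "k \<in> {..<?K}"
    show "space M - G n B k \<in> sig (?I k)" using G_sig[OF assms(2)] by (intro sig_compl)
  qed (use False in auto)
  also have "\<dots> = (\<Prod>k\<in>{..<?K}. 1 - prob (G n B k))"
    using G_events by (intro prod.cong refl prob_compl)
  also have "\<dots> \<le> (\<Prod>k\<in>{..<?K}. exp (- ?g))"
  proof (intro prod_mono conjI)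
    fix k
    show "0 \<le> 1 - prob (G n B k)" by simp
    have "1 - prob (G n B k) \<le> 1 + (- ?g)" using G_lower[OF assms, of k] by linarith
    also have "\<dots> \<le> exp (- ?g)" by (rule exp_ge_add_one_self)
    finally show "1 - prob (G n B k) \<le> exp (- ?g)" .
  qed
  also have "\<dots> = exp (- ?g) ^ ?K" by simp
  also have "\<dots> = exp (real ?K * (- ?g))" by (simp add: exp_of_nat_mult)
  finally have fin: "prob (\<Inter>k\<in>{..<?K}. space M - G n B k) \<le> exp (real ?K * (- ?g))" .
  show ?thesis unfolding eq using fin by (simp only: mult_minus_right)
qed

lemma Bad_events: "Bad N n B \<in> events"
  unfolding Bad_def using G_events by auto

lemma pat_switch: "(1 - pat b m) * pat b (Suc m) + pat b m * (1 - pat b (Suc m)) = 1"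
  by (simp add: pat_def)

lemma link: assumes "\<omega> \<in> space M" "\<omega> \<notin> Bad N n B" "n \<ge> 1" "n < B" "N \<le> N'"
  shows "n - 1 \<le> longest_switch X 1 N' \<omega>"
proof -
  have "\<omega> \<notin> (\<Inter>k\<in>{..<N div B}. space M - G n B k)" using assms(1,2) unfolding Bad_def by blast
  then obtain k where k: "k < N div B" "\<omega> \<in> G n B k" using assms(1) by blast
  obtain i where i: "i \<in> Sb n B k" "\<omega> \<in> D n i" using k(2) unfolding G_def by auto
  obtain b where b: "\<omega> \<in> Dc n i b" using i(2) unfolding D_def by auto
  have h: "\<And>t. t < Suc n \<Longrightarrow> X (i - 1 + t) \<omega> = pat b (t-1)"
    using b by (auto simp: Dc_def cylo_def)
  have i2: "i \<ge> 2" using Sb_ge2 i(1) by simp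
  have kB: "k*B + B \<le> N"
  proof -
    have "Suc k \<le> N div B" using k(1) by simp
    then have "Suc k * B \<le> N div B * B" by (rule mult_le_mono1)
    also have "\<dots> \<le> N" by simp
    finally show ?thesis by simp
  qed
  have iup: "i + n \<le> k*B + B + 1" using i(1) assms(4) unfolding Sb_def by auto
  have sw: "switches X n i \<omega> = real n - 1"
  proof -
    have "switches X n i \<omega> = (\<Sum>l\<in>{i+1..n+i-1}. (1::real))"
      unfolding switches_def
    proof (intro sum.cong refl)
      fix l assume l: "l \<in> {i+1..n+i-1}"
      have x1: "X (l-1) \<omega> = pat b (l-i-1)" using h[of "l-i"] l i2 by auto
      have e: "Suc (l-i-1) = l - i" using l by auto
      have x2: "X l \<omega> = pat b (Suc (l-i-1))" unfolding e using h[of "l-i+1"] l i2 by auto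
      show "(1 - X (l - 1) \<omega>) * X l \<omega> + X (l - 1) \<omega> * (1 - X l \<omega>) = 1"
        unfolding x1 x2 by (rule pat_switch)
    qed
    also have "\<dots> = real n - 1" using assms(3) by (simp add: of_nat_diff)
    finally show ?thesis .
  qed
  have "\<omega> \<in> Hev X 1 n N'"
    unfolding Hev_def using sw i2 iup kB assms(4,5) by (auto intro!: bexI[of _ i])
  then have mem: "n - 1 \<in> {n - 1 | n. 1 \<le> n \<and> n \<le> N' \<and> \<omega> \<in> Hev X 1 n N'}"
    using assms kB by auto
  have fin: "finite {n - 1 | n. 1 \<le> n \<and> n \<le> N' \<and> \<omega> \<in> Hev X 1 n N'}"
    by (rule finite_subset[of _ "{..N'}"]) auto
  show ?thesis unfolding longest_switch_def using Max_ge[OF fin mem] .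
qed

end



lemma key:
  fixes a s U xh :: real and n B N :: nat
  assumes a: "a > 0" and s: "s > 1" and U: "U = s - 1 - ln (2 * ln s) / a" "U \<ge> 1"
    and n: "U \<le> real n" "real n \<le> U + 1" "n \<ge> 2" and B: "B = n^2"
    and N: "exp (a * s) \<le> real N" "real N \<le> exp (a * s) + 1"
    and xh: "xh = 2 * exp a * ln s * exp (-a * s)"
    and E2: "(U+1)^2 * xh \<le> exp (-2*a)"
    and E3: "(exp (a * s)+1) * xh / U + (U+1)^2 * xh + (exp (a * s)+1) * (U+1)^2 * xh^2 * exp (2*a) \<le> 1"
  shows "real (N div B) * (real (B-n) * exp (-a)^n - real (B-n)^2 * exp (-a)^(2*(n-1))) \<ge> 2 * ln s - 1"
proof -
  define x where "x = exp (-a)^n"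
  have x_eq: "x = exp (-a * real n)" unfolding x_def by (simp add: exp_of_nat_mult[symmetric] mult.commute)
  have lns: "ln s > 0" using s by simp
  have aU1: "a * (U+1) = a * s - ln (2 * ln s)" using U(1) a by (simp add: field_simps)
  have aU: "a * U = a * s - a - ln (2 * ln s)" using U(1) a by (simp add: field_simps)
  have xl: "x \<ge> 2 * ln s * exp (-a * s)"
  proof -
    have "x \<ge> exp (-(a * (U+1)))" unfolding x_eq using n(2) a by simp
    also have "exp (-(a * (U+1))) = exp (ln (2 * ln s)) * exp (-a * s)"
      unfolding aU1 by (simp add: exp_diff exp_minus field_simps)
    also have "\<dots> = 2 * ln s * exp (-a * s)" using lns by simp
    finally show ?thesis .
  qed
  have xu: "x \<le> xh"
  proof -
    have "x \<le> exp (-(a * U))" unfolding x_eq using n(1) a by simp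
    also have "exp (-(a * U)) = exp (ln (2 * ln s)) * exp a * exp (-a * s)"
      unfolding aU by (simp add: exp_diff exp_add exp_minus field_simps)
    also have "\<dots> = xh" using lns xh by simp
    finally show ?thesis .
  qed
  have x0: "x > 0" unfolding x_def by simp
  have r2: "exp (-a)^(2*(n-1)) = x^2 * exp (2*a)"
  proof -
    have "exp (-a)^(2*(n-1)) = exp (-a * real (2*(n-1)))" by (simp add: exp_of_nat_mult[symmetric] mult.commute)
    also have "real (2*(n-1)) = 2 * real n - 2" using n(3) by (simp add: of_nat_diff)
    also have "exp (-a * (2 * real n - 2)) = exp (-a * real n)^2 * exp (2*a)"
      by (simp add: power2_eq_square exp_add[symmetric] algebra_simps)
    finally show ?thesis unfolding x_eq .
  qed
  define Br where "Br = real B"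
  define C where "C = real (B - n)"
  define Nr where "Nr = real N"
  define K where "K = real (N div B)"
  have nr: "real n \<ge> 2" using n(3) by simp
  have Br_eq: "Br = real n ^ 2" unfolding Br_def B by simp
  have Bn: "n \<le> B" unfolding B using n(3) by (simp add: power2_eq_square)
  have C_eq: "C = real n ^ 2 - real n" unfolding C_def using Bn B by (simp add: of_nat_diff)
  have C0: "C \<ge> 0" unfolding C_def by simp
  have CB: "C \<le> Br" unfolding C_eq Br_eq by simp
  have Bpos: "Br > 0" unfolding Br_eq using nr by simp
  have BU: "Br \<le> (U+1)^2" unfolding Br_eq using n(1,2) U(2) by (intro power_mono) auto
  have glow0: "C * x * exp (2*a) \<le> 1"
  proof -
    have "C * x * exp (2*a) \<le> (U+1)^2 * xh * exp (2*a)"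
      using CB BU xu C0 x0 by (intro mult_right_mono mult_mono) auto
    also have "\<dots> \<le> exp (-2*a) * exp (2*a)" using E2 by (intro mult_right_mono) auto
    also have "\<dots> = 1" by (simp add: exp_add[symmetric])
    finally show ?thesis .
  qed
  define g where "g = C * x - C^2 * (x^2 * exp (2*a))"
  have g_eq: "g = C * x * (1 - C * x * exp (2*a))" unfolding g_def by (simp add: algebra_simps power2_eq_square)
  have g0: "g \<ge> 0" unfolding g_eq using glow0 C0 x0 by simp
  have gle: "g \<le> C * x" unfolding g_def by simp
  have KB: "K * Br \<ge> Nr - Br"
  proof -
    have e: "real N = real (N div B) * real B + real (N mod B)"
      by (metis of_nat_add of_nat_mult div_mult_mod_eq)
    have "N mod B < B" using Bn n(3) by simp
    then have "real (N mod B) < real B" by simp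
    then have "real (N div B) * real B \<ge> real N - real B" using e by linarith
    then show ?thesis unfolding K_def Br_def Nr_def .
  qed
  have K1: "K \<ge> Nr / Br - 1" using KB Bpos by (simp add: field_simps)
  have "K * g \<ge> (Nr/Br - 1) * g" using K1 g0 by (intro mult_right_mono) auto
  moreover have "(Nr/Br - 1) * g \<ge> Nr * x - Nr * x / real n - Nr * Br * x^2 * exp (2*a) - Br * x"
  proof -
    have "(Nr/Br - 1) * g = Nr/Br * (C*x) - Nr/Br * C^2 * x^2 * exp (2*a) - g"
      unfolding g_def by (simp add: algebra_simps)
    moreover have "Nr/Br * (C*x) = Nr * x - Nr * x / real n"
      unfolding C_eq Br_eq using nr by (simp add: field_simps power2_eq_square)
    moreover have "Nr/Br * C^2 * x^2 * exp (2*a) \<le> Nr * Br * x^2 * exp (2*a)"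
    proof -
      have "C^2 \<le> Br^2" using C0 CB by (intro power_mono) auto
      then have "C^2 / Br \<le> Br" using Bpos by (simp add: field_simps power2_eq_square)
      moreover have "Nr * x^2 * exp (2*a) \<ge> 0" unfolding Nr_def by simp
      ultimately have "(C^2 / Br) * (Nr * x^2 * exp (2*a)) \<le> Br * (Nr * x^2 * exp (2*a))"
        by (intro mult_right_mono) auto
      then show ?thesis by (simp add: field_simps)
    qed
    moreover have "g \<le> Br * x" using gle CB x0 by (meson dual_order.trans less_eq_real_def mult_right_mono)
    ultimately show ?thesis by linarith
  qed
  moreover have "Nr * x \<ge> 2 * ln s"
  proof -
    have "Nr * x \<ge> exp (a * s) * (2 * ln s * exp (-a * s))"
      using N(1) xl lns unfolding Nr_def by (intro mult_mono) auto
    also have "exp (a * s) * (2 * ln s * exp (-a * s)) = 2 * ln s" by (simp add: exp_minus field_simps)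
    finally show ?thesis .
  qed
  moreover have "Nr * x / real n \<le> (exp (a * s)+1) * xh / U"
  proof -
    have "Nr * x \<le> (exp (a * s)+1) * xh" using N(2) xu x0 unfolding Nr_def by (intro mult_mono) auto
    moreover have "Nr * x \<ge> 0" unfolding Nr_def using x0 by simp
    ultimately show ?thesis using n(1) U(2) by (meson divide_mono order_trans less_eq_real_def frac_le zero_less_one less_le_trans)
  qed
  moreover have "Nr * Br * x^2 * exp (2*a) \<le> (exp (a * s)+1) * (U+1)^2 * xh^2 * exp (2*a)"
  proof -
    have "x^2 \<le> xh^2" using xu x0 by (intro power_mono) auto
    then have "Nr * Br * x^2 \<le> (exp (a * s)+1) * (U+1)^2 * xh^2"
      using N(2) BU Bpos unfolding Nr_def by (intro mult_mono) auto
    then show ?thesis by (intro mult_right_mono) auto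
  qed
  moreover have "Br * x \<le> (U+1)^2 * xh" using BU xu x0 Bpos by (intro mult_mono) auto
  ultimately have "K * g \<ge> 2 * ln s - 1" using E3 by linarith
  then show ?thesis unfolding K_def g_def C_def x_def r2 by simp
qed




lemma asym:
  fixes a e :: real assumes "a > 0" "e > 0"
  shows "eventually (\<lambda>y. 1 < e*y \<and> 1 \<le> e*y - 1 - ln (2 * ln (e*y)) / a
     \<and> (e*y - 1 - ln (2 * ln (e*y)) / a + 1)^2 * (2*exp a * ln (e*y) * exp (-a*(e*y))) \<le> exp (-2*a)
     \<and> (exp (a*(e*y))+1) * (2*exp a * ln (e*y) * exp (-a*(e*y))) / (e*y - 1 - ln (2 * ln (e*y)) / a)
        + (e*y - 1 - ln (2 * ln (e*y)) / a + 1)^2 * (2*exp a * ln (e*y) * exp (-a*(e*y)))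
        + (exp (a*(e*y))+1) * (e*y - 1 - ln (2 * ln (e*y)) / a + 1)^2 * (2*exp a * ln (e*y) * exp (-a*(e*y)))^2 * exp (2*a)
        \<le> 1
     \<and> 3/2 * ln y \<le> 2 * ln (e*y) - 1) at_top"
proof -
  have 1: "eventually (\<lambda>y. 1 < e*y) at_top" using assms by real_asymp
  have 2: "eventually (\<lambda>y. 1 \<le> e*y - 1 - ln (2 * ln (e*y)) / a) at_top" using assms by real_asymp
  have 3: "eventually (\<lambda>y. (e*y - 1 - ln (2 * ln (e*y)) / a + 1)^2 * (2*exp a * ln (e*y) * exp (-a*(e*y))) \<le> exp (-2*a)) at_top"
    using assms by real_asymp
  have 4: "eventually (\<lambda>y. (exp (a*(e*y))+1) * (2*exp a * ln (e*y) * exp (-a*(e*y))) / (e*y - 1 - ln (2 * ln (e*y)) / a)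
        + (e*y - 1 - ln (2 * ln (e*y)) / a + 1)^2 * (2*exp a * ln (e*y) * exp (-a*(e*y)))
        + (exp (a*(e*y))+1) * (e*y - 1 - ln (2 * ln (e*y)) / a + 1)^2 * (2*exp a * ln (e*y) * exp (-a*(e*y)))^2 * exp (2*a)
        \<le> 1) at_top"
    using assms by real_asymp
  have 5: "eventually (\<lambda>y. 3/2 * ln y \<le> 2 * ln (e*y) - 1) at_top" using assms by real_asymp
  show ?thesis using 1 2 3 4 5 by eventually_elim blast
qed

theorem theorem2p2:
  fixes M :: "'a measure" and X :: "nat \<Rightarrow> 'a \<Rightarrow> real" and p lam \<epsilon> :: real
  assumes "prob_space M"
    and "0 < p" and "p < 1"
    and "prob_space.indep_vars M (\<lambda>_. borel) X {1..}"
    and "\<And>i. i \<ge> 1 \<Longrightarrow> measure M {\<omega> \<in> space M. X i \<omega> = 1} = p"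
    and "\<And>i. i \<ge> 1 \<Longrightarrow> measure M {\<omega> \<in> space M. X i \<omega> = 0} = 1 - p"
    and "lam = 1 / sqrt (p * (1 - p))"
    and "\<epsilon> > 0"
  shows "AE \<omega> in M. \<exists>N0. \<forall>N\<ge>N0.
           int (longest_switch X 1 N \<omega>) \<ge>
           \<lfloor>log lam (real N) - log lam (log lam (log lam (real N)))
             + log lam (log lam (exp 1)) - log lam 2 - 1 - \<epsilon>\<rfloor>"
proof -
  interpret prob_space M by (rule assms(1))
  interpret swl M X p by unfold_locales (use assms(2-6) in auto)
  define a where "a = ln lam"
  have lam_r: "lam = 1 / r" using assms(7) by (simp add: r_def)
  have lam2: "lam \<ge> 2" unfolding lam_r using r_half r_pos by (simp add: field_simps)
  have a_pos: "a > 0" unfolding a_def using lam2 by simp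
  have ea: "exp (-a) = r" unfolding a_def lam_r using r_pos by (simp add: ln_div)
  have eps: "\<epsilon> > 0" by (rule assms(8))
  define U where "U = (\<lambda>y::real. \<epsilon>*y - 1 - ln (2 * ln (\<epsilon>*y)) / a)"
  define nk where "nk = (\<lambda>k::nat. nat \<lfloor>U (real k)\<rfloor> + 1)"
  define NN where "NN = (\<lambda>k::nat. nat \<lceil>exp (a * (\<epsilon> * real k))\<rceil>)"
  define BadK where "BadK = (\<lambda>k. Bad (NN k) (nk k) ((nk k)^2))"
  define xh where "xh = (\<lambda>y. 2*exp a * ln (\<epsilon>*y) * exp (-a*(\<epsilon>*y)))"
  have EVr: "eventually (\<lambda>y. 1 < \<epsilon>*y \<and> 1 \<le> U y
     \<and> (U y + 1)^2 * xh y \<le> exp (-2*a)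
     \<and> (exp (a*(\<epsilon>*y))+1) * xh y / U y + (U y + 1)^2 * xh y
        + (exp (a*(\<epsilon>*y))+1) * (U y + 1)^2 * (xh y)^2 * exp (2*a) \<le> 1
     \<and> 3/2 * ln y \<le> 2 * ln (\<epsilon>*y) - 1) at_top"
    unfolding U_def xh_def using asym[OF a_pos eps] .
  have EVn: "eventually (\<lambda>k. 1 < \<epsilon>*real k \<and> 1 \<le> U (real k)
     \<and> (U (real k) + 1)^2 * xh (real k) \<le> exp (-2*a)
     \<and> (exp (a*(\<epsilon>*real k))+1) * xh (real k) / U (real k) + (U (real k) + 1)^2 * xh (real k)
        + (exp (a*(\<epsilon>*real k))+1) * (U (real k) + 1)^2 * (xh (real k))^2 * exp (2*a) \<le> 1
     \<and> 3/2 * ln (real k) \<le> 2 * ln (\<epsilon>*real k) - 1) sequentially"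
    by (rule filterlim_iff[THEN iffD1, OF filterlim_real_sequentially, rule_format, OF EVr])
  have nk_facts: "real (nk k) \<ge> U (real k) \<and> real (nk k) \<le> U (real k) + 1 \<and> nk k \<ge> 2
                  \<and> int (nk k) = \<lfloor>U (real k)\<rfloor> + 1"
    if "1 \<le> U (real k)" for k
  proof -
    have f1: "\<lfloor>U (real k)\<rfloor> \<ge> 1" using that by linarith
    then have e: "int (nk k) = \<lfloor>U (real k)\<rfloor> + 1" unfolding nk_def by simp
    then have "real (nk k) = real_of_int \<lfloor>U (real k)\<rfloor> + 1" by (metis of_int_of_nat_eq of_int_1 of_int_add)
    then show ?thesis using e f1 of_int_floor_le[of "U (real k)"] real_of_int_floor_add_one_gt[of "U (real k)"] by linarith
  qed
  have bound: "eventually (\<lambda>k. prob (BadK k) \<le> real k powr (-3/2)) sequentially"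
    using EVn
  proof eventually_elim
    case (elim k)
    define s where "s = \<epsilon> * real k"
    have s1: "s > 1" using elim s_def by simp
    have k0: "real k > 0"
    proof (rule ccontr)
      assume "\<not> real k > 0"
      then have "real k = 0" by simp
      then show False using s1 unfolding s_def by simp
    qed
    obtain n where n: "n = nk k" by simp
    have nf: "real n \<ge> U (real k)" "real n \<le> U (real k) + 1" "n \<ge> 2"
      using nk_facts[of k] elim n by auto
    have Nf1: "exp (a * s) \<le> real (NN k)" unfolding NN_def s_def by (rule real_nat_ceiling_ge)
    have "real (NN k) = real_of_int \<lceil>exp (a * s)\<rceil>" unfolding NN_def s_def
      by (metis exp_gt_zero less_imp_le of_nat_nat zero_le_ceiling zero_less_ceiling)
    then have Nf2: "real (NN k) \<le> exp (a * s) + 1" using ceiling_correct[of "exp (a * s)"] by linarith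
    note Nf = Nf1 Nf2
    have K: "real (NN k div n^2) * (real (n^2-n) * exp (-a)^n - real (n^2-n)^2 * exp (-a)^(2*(n-1))) \<ge> 2 * ln s - 1"
    proof (rule key[OF a_pos s1 _ _ nf _ Nf])
      show "U (real k) = s - 1 - ln (2 * ln s) / a" unfolding U_def s_def ..
      show "1 \<le> U (real k)" using elim by simp
      show "n^2 = n^2" ..
      show "xh (real k) = 2 * exp a * ln s * exp (-a * s)" unfolding xh_def s_def ..
      show "(U (real k) + 1)\<^sup>2 * xh (real k) \<le> exp (-2*a)" using elim by simp
      show "(exp (a * s)+1) * xh (real k) / U (real k) + (U (real k) + 1)^2 * xh (real k)
        + (exp (a * s)+1) * (U (real k) + 1)^2 * (xh (real k))^2 * exp (2*a) \<le> 1"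
        using elim unfolding s_def by simp
    qed
    have nB: "n < n^2" using nf(3) by (simp add: power2_eq_square)
    have "prob (BadK k) \<le> exp (- (real (NN k div n^2) * (real (n^2-n) * r^n - real (n^2-n)^2 * r^(2*(n-1)))))"
      unfolding BadK_def n[symmetric] by (rule prob_Bad) (use nf(3) nB in auto)
    also have "\<dots> \<le> exp (- (3/2 * ln (real k)))"
      using K elim unfolding ea s_def by simp
    also have "\<dots> = real k powr (-3/2)" using k0 by (simp add: powr_def)
    finally show ?case .
  qed
  have summ: "summable (\<lambda>k. prob (BadK k))"
  proof (rule summable_comparison_test_ev)
    show "eventually (\<lambda>k. norm (prob (BadK k)) \<le> real k powr (-3/2)) sequentially"
      using bound by eventually_elim simp
    show "summable (\<lambda>k. real k powr (-3/2))" by (subst summable_real_powr_iff) simp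
  qed
  have BC: "AE \<omega> in M. eventually (\<lambda>k. \<omega> \<in> space M - BadK k) sequentially"
  proof (rule borel_cantelli_AE1[OF _ _ summ])
    fix k show "BadK k \<in> events" unfolding BadK_def by (rule Bad_events)
    then show "emeasure M (BadK k) < \<infinity>" by (simp add: less_top[symmetric])
  qed
  have EV2: "eventually (\<lambda>k. 1 < \<epsilon>*real k \<and> 1 \<le> U (real k)) sequentially"
    using EVn by eventually_elim simp
  from BC AE_space show ?thesis
  proof eventually_elim
    case (elim \<omega>)
    have "eventually (\<lambda>k. \<omega> \<in> space M - BadK k \<and> 1 < \<epsilon>*real k \<and> 1 \<le> U (real k)) sequentially"
      using elim(1) EV2 by eventually_elim simp
    then obtain k1 where k1: "\<And>k. k \<ge> k1 \<Longrightarrow> \<omega> \<in> space M - BadK k \<and> 1 < \<epsilon>*real k \<and> 1 \<le> U (real k)"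
      unfolding eventually_sequentially by blast
    define N0 where "N0 = nat \<lceil>exp (a*\<epsilon>*(real k1 + 1))\<rceil> + 1"
    show ?case
    proof (intro exI allI impI)
      fix N assume N: "N \<ge> N0"
      have "exp (a*\<epsilon>*(real k1 + 1)) \<le> real (nat \<lceil>exp (a*\<epsilon>*(real k1 + 1))\<rceil>)"
        by (rule real_nat_ceiling_ge)
      moreover have "real (nat \<lceil>exp (a*\<epsilon>*(real k1 + 1))\<rceil>) \<le> real N" using N unfolding N0_def by simp
      ultimately have NN0: "real N \<ge> exp (a*\<epsilon>*(real k1 + 1))" by linarith
      have N1: "real N > 0" using NN0 exp_gt_zero[of "a*\<epsilon>*(real k1 + 1)"] by linarith
      have "exp (a*\<epsilon>*(real k1 + 1)) \<le> exp (ln (real N))" using NN0 N1 by simp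
      then have lnN: "ln (real N) \<ge> a*\<epsilon>*(real k1 + 1)" by (simp only: exp_le_cancel_iff)
      have ae: "a * \<epsilon> > 0" using a_pos eps by simp
      define q where "q = ln (real N) / (a*\<epsilon>)"
      have q1: "q \<ge> real k1 + 1" unfolding q_def using lnN ae by (simp add: field_simps)
      define k where "k = nat \<lfloor>q\<rfloor>"
      have fq: "\<lfloor>q\<rfloor> \<ge> 0" using q1 by simp
      have rk: "real k = real_of_int \<lfloor>q\<rfloor>" unfolding k_def using fq by simp
      have kq: "real k \<le> q" "q < real k + 1" unfolding rk
        using of_int_floor_le[of q] real_of_int_floor_add_one_gt[of q] by linarith+
      have kk1: "k \<ge> k1" using kq q1 by linarith
      from k1[OF kk1] have kb: "\<omega> \<notin> BadK k" "1 < \<epsilon>*real k" "1 \<le> U (real k)" by auto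
      define s where "s = \<epsilon> * real k"
      define t where "t = ln (real N) / a"
      have st: "s \<le> t" "t < s + \<epsilon>"
      proof -
        have "t = q * \<epsilon>" unfolding t_def q_def using eps a_pos by (simp add: field_simps)
        moreover have "\<epsilon> * real k \<le> \<epsilon> * q" using kq(1) eps by (intro mult_left_mono) auto
        moreover have "\<epsilon> * q < \<epsilon> * (real k + 1)" using kq(2) eps by (intro mult_strict_left_mono) auto
        ultimately show "s \<le> t" "t < s + \<epsilon>" unfolding s_def by (simp_all add: algebra_simps)
      qed
      have s1: "s > 1" using kb s_def by simp
      have NNk: "NN k \<le> N"
      proof -
        have "a * s \<le> ln (real N)" using st a_pos unfolding t_def by (simp add: field_simps)
        then have "exp (a * s) \<le> exp (ln (real N))" by (simp only: exp_le_cancel_iff)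
        then have "exp (a * s) \<le> real N" using N1 by simp
        then show ?thesis unfolding NN_def s_def by (simp add: nat_le_iff ceiling_le_iff)
      qed
      obtain n where n: "n = nk k" by simp
      have nf: "real n \<ge> U (real k)" "real n \<le> U (real k) + 1" "n \<ge> 2" "int n = \<lfloor>U (real k)\<rfloor> + 1"
        using nk_facts[of k] kb n by auto
      have nB: "n < n^2" using nf(3) by (simp add: power2_eq_square)
      have L: "n - 1 \<le> longest_switch X 1 N \<omega>"
        using link[of \<omega> "NN k" n "n^2" N] elim(2) kb(1) nf(3) nB NNk unfolding BadK_def n by auto
      have T: "log lam (real N) - log lam (log lam (log lam (real N)))
             + log lam (log lam (exp 1)) - log lam 2 - 1 - \<epsilon> \<le> U (real k)"
      proof -
        have t1: "t > 1" using st s1 by simp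
        have lt: "ln t > 0" using t1 by simp
        have ls: "ln s > 0" using s1 by simp
        have e1: "log lam (real N) = t" unfolding t_def a_def log_def ..
        have e2: "log lam (log lam t) = (ln (ln t) - ln a) / a"
          unfolding log_def a_def[symmetric] using lt a_pos by (simp add: ln_div)
        have e3: "log lam (log lam (exp 1)) = - ln a / a"
          unfolding log_def a_def[symmetric] using a_pos by (simp add: ln_div)
        have e4: "log lam 2 = ln 2 / a" unfolding log_def a_def ..
        have e5: "U (real k) = s - 1 - (ln 2 + ln (ln s)) / a"
          unfolding U_def s_def[symmetric] using ls by (simp add: ln_mult)
        have mono: "ln (ln s) / a \<le> ln (ln t) / a"
          using st(1) ls lt a_pos s1 by (intro divide_right_mono) auto
        show ?thesis unfolding e1 e2 e3 e4 e5 using mono st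
          by (simp add: diff_divide_distrib add_divide_distrib)
      qed
      have "\<lfloor>log lam (real N) - log lam (log lam (log lam (real N)))
             + log lam (log lam (exp 1)) - log lam 2 - 1 - \<epsilon>\<rfloor> \<le> \<lfloor>U (real k)\<rfloor>"
        using T by (rule floor_mono)
      also have "\<dots> = int n - 1" using nf(4) by simp
      also have "\<dots> \<le> int (longest_switch X 1 N \<omega>)" using L nf(3) by linarith
      finally show "\<lfloor>log lam (real N) - log lam (log lam (log lam (real N)))
             + log lam (log lam (exp 1)) - log lam 2 - 1 - \<epsilon>\<rfloor> \<le> int (longest_switch X 1 N \<omega>)" .
    qed
  qed
qed


end
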